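(* Fix $r,\nu,\mu\in\mathbb R$, $\eta>0$, $\sigma>0$, $s_0>0$, $\lambda>0$, $\gamma>0$, and for $T>0$ let $$\rho^*(T)=\frac{\eta T}{W\left(\lambda\gamma s_0\eta^2Te^{(\nu-\frac{\eta^2}{2})T}\right)}\frac{\mu-r}{\sigma},$$ where $W$ is the Lambert function. Then $$\rho^*(T)=\frac{\mu-r}{\sigma}\left(\frac1{\eta s_0\lambda\gamma}+\left(\eta-\frac{\nu-\frac{\eta^2}{2}}{\eta s_0\lambda\gamma}\right)T\right)+T\epsilon(T),\quad\text{with }\lim_{T\to0^+}\epsilon(T)=0.$$ Moreover, if $\nu>\frac{\eta^2}{2}$, then $$\lim_{T\to+\infty}\rho^*(T)=\frac{\mu-r}{\sigma}\frac{\eta}{\nu-\frac{\eta^2}{2}}.$$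
   Context: The Lambert function $W$ is the inverse of the bijection $x\in(-1,+\infty)\mapsto xe^x\in(-1/e,+\infty)$. *)

theory Defs
  imports "HOL-Analysis.Analysis"
begin

text \<open>Lambert function: inverse of the bijection x \<in> (-1,+\<infinity>) \<mapsto> x e^x \<in> (-1/e,+\<infinity>).
  Outside (-1/e,+\<infinity>) the value is unspecified.\<close>
definition lambertW :: "real \<Rightarrow> real" where
  "lambertW y = (THE x. x > -1 \<and> x * exp x = y)"

definition rho_star ::
  "real \<Rightarrow> real \<Rightarrow> real \<Rightarrow> real \<Rightarrow> real \<Rightarrow> real \<Rightarrow> real \<Rightarrow> real \<Rightarrow> real \<Rightarrow> real" where
  "rho_star r \<nu> \<mu> \<eta> \<sigma> s0 lam \<gamma> T =
     (\<eta> * T / lambertW (lam * \<gamma> * s0 * \<eta>^2 * T * exp ((\<nu> - \<eta>^2/2) * T))) * ((\<mu> - r) / \<sigma>)"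

end

theory Submission
  imports Defs "HOL-Real_Asymp.Real_Asymp"
begin

lemma xexp_strict_mono:
  fixes s t :: real
  assumes "0 < s" "s < t"
  shows "s * exp s < t * exp t"
  using assms by (intro mult_strict_mono) auto

lemma lambertW_pos:
  fixes x :: real
  assumes "x > 0"
  shows "lambertW x > 0 \<and> lambertW x * exp (lambertW x) = x"
proof -
  have cont: "continuous_on {0..x} (\<lambda>t. t * exp t)"
    by (intro continuous_intros)
  have "x \<le> x * exp x" using assms by simp
  then obtain t where t: "0 \<le> t" "t \<le> x" "t * exp t = x"
    using IVT'[of "\<lambda>t. t * exp t" 0 x x] cont assms by auto
  have tpos: "t > 0" using t assms by (cases "t = 0") auto
  have pos: "s > 0" if "s * exp s = x" for s :: real
  proof (rule ccontr)
    assume "\<not> s > 0"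
    then have "s * exp s \<le> 0" by (simp add: mult_nonpos_nonneg)
    then show False using that assms by simp
  qed
  have uniq: "s = t" if "s > -1 \<and> s * exp s = x" for s
  proof -
    have sp: "s > 0" using pos that by blast
    show ?thesis
    proof (rule ccontr)
      assume "s \<noteq> t"
      then consider "s < t" | "t < s" by linarith
      then show False
        using xexp_strict_mono[of s t] xexp_strict_mono[of t s] sp tpos that t by cases auto
    qed
  qed
  have "lambertW x = t"
    unfolding lambertW_def
    by (rule the_equality) (use t tpos uniq in auto)
  then show ?thesis using t tpos by simp
qed

lemma lambertW_le:
  fixes x :: real
  assumes "x > 0"
  shows "lambertW x \<le> x"
proof -
  have h: "lambertW x > 0" "lambertW x * exp (lambertW x) = x" using lambertW_pos[OF assms] by auto
  have "lambertW x * 1 \<le> lambertW x * exp (lambertW x)"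
    using h(1) by (intro mult_left_mono) auto
  then show ?thesis using h by simp
qed

theorem lemma3:
  fixes r \<nu> \<mu> \<eta> \<sigma> s0 lam \<gamma> :: real
  assumes "\<eta> > 0" "\<sigma> > 0" "s0 > 0" "lam > 0" "\<gamma> > 0"
  shows "(\<exists>\<epsilon> :: real \<Rightarrow> real.
            (\<forall>T>0. rho_star r \<nu> \<mu> \<eta> \<sigma> s0 lam \<gamma> T =
               (\<mu> - r) / \<sigma> * (1 / (\<eta> * s0 * lam * \<gamma>)
                  + (\<eta> - (\<nu> - \<eta>^2/2) / (\<eta> * s0 * lam * \<gamma>)) * T)
               + T * \<epsilon> T)
          \<and> (\<epsilon> \<longlongrightarrow> 0) (at_right 0))
       \<and> (\<nu> > \<eta>^2/2 \<longrightarrow>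
          ((\<lambda>T. rho_star r \<nu> \<mu> \<eta> \<sigma> s0 lam \<gamma> T) \<longlongrightarrow>
             (\<mu> - r) / \<sigma> * (\<eta> / (\<nu> - \<eta>^2/2))) at_top)"
proof -
  define a where "a = lam * \<gamma> * s0 * \<eta>^2"
  define b where "b = \<nu> - \<eta>^2/2"
  define c where "c = (\<mu> - r) / \<sigma>"
  define X where "X = (\<lambda>T::real. a * T * exp (b * T))"
  define w where "w = (\<lambda>T. lambertW (X T))"
  have apos: "a > 0" using assms unfolding a_def by simp
  have Xpos: "X T > 0" if "T > 0" for T using that apos unfolding X_def by simp
  have wpos: "w T > 0" and weq: "w T * exp (w T) = a * T * exp (b * T)" if "T > 0" for T
    using lambertW_pos[OF Xpos[OF that]] unfolding w_def X_def by auto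
  have rho: "rho_star r \<nu> \<mu> \<eta> \<sigma> s0 lam \<gamma> T = \<eta> * T / w T * c" for T
    unfolding rho_star_def w_def X_def a_def b_def c_def by (simp add: mult.assoc)
  have rho_exp: "rho_star r \<nu> \<mu> \<eta> \<sigma> s0 lam \<gamma> T = c * \<eta> / a * exp (w T - b * T)"
    if "T > 0" for T
  proof -
    have "T / w T = exp (w T) / (a * exp (b * T))"
      using weq[OF that] wpos[OF that] apos by (simp add: field_simps)
    have "\<eta> * T / w T * c = \<eta> * (T / w T) * c" by simp
    also have "\<dots> = \<eta> * (exp (w T) / (a * exp (b * T))) * c" using \<open>T / w T = _\<close> by simp
    also have "\<dots> = c * \<eta> / a * exp (w T - b * T)" using apos by (simp add: exp_diff)
    finally show ?thesis unfolding rho .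
  qed
  define tgt where "tgt = (\<lambda>T. (\<mu> - r) / \<sigma> * (1 / (\<eta> * s0 * lam * \<gamma>)
                  + (\<eta> - (\<nu> - \<eta>^2/2) / (\<eta> * s0 * lam * \<gamma>)) * T))"
  have tgt_eq: "tgt T = c * \<eta> / a * (1 + (a - b) * T)" for T
    unfolding tgt_def a_def b_def c_def using assms by (simp add: field_simps power2_eq_square)
  define \<epsilon> where "\<epsilon> = (\<lambda>T. (rho_star r \<nu> \<mu> \<eta> \<sigma> s0 lam \<gamma> T - tgt T) / T)"
  have part1a: "\<forall>T>0. rho_star r \<nu> \<mu> \<eta> \<sigma> s0 lam \<gamma> T = tgt T + T * \<epsilon> T"
    unfolding \<epsilon>_def by simp
  define h where "h = (\<lambda>u::real. if u = 0 then 1 else (exp u - 1) / u)"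
  have hlim: "((\<lambda>u::real. (exp u - 1)/u) \<longlongrightarrow> 1) (at 0)" by real_asymp
  have "(h \<longlongrightarrow> 1) (at 0)"
    using hlim by (rule Lim_transform_eventually)
      (auto simp: h_def eventually_at_filter)
  then have hcont: "isCont h 0" unfolding isCont_def h_def by simp
  have hexp: "exp u - 1 = h u * u" for u unfolding h_def by simp
  have Xlim: "(X \<longlongrightarrow> 0) (at_right 0)"
  proof -
    have "(X \<longlongrightarrow> X 0) (at_right 0)" unfolding X_def
      by (intro tendsto_intros)
    then show ?thesis unfolding X_def by simp
  qed
  have wlim: "(w \<longlongrightarrow> 0) (at_right 0)"
  proof (rule tendsto_sandwich[OF _ _ tendsto_const Xlim])
    show "\<forall>\<^sub>F T in at_right 0. 0 \<le> w T"
      using eventually_at_right_less[of 0] by (rule eventually_mono) (use wpos in force)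
    show "\<forall>\<^sub>F T in at_right 0. w T \<le> X T"
      using eventually_at_right_less[of 0]
      by (rule eventually_mono) (use lambertW_le Xpos in \<open>force simp: w_def\<close>)
  qed
  have wT: "((\<lambda>T. w T / T) \<longlongrightarrow> a) (at_right 0)"
  proof -
    have "((\<lambda>T. a * exp (b * T - w T)) \<longlongrightarrow> a * exp (b * 0 - 0)) (at_right 0)"
      by (intro tendsto_intros wlim)
    then have l: "((\<lambda>T. a * exp (b * T - w T)) \<longlongrightarrow> a) (at_right 0)" by simp
    have "\<forall>\<^sub>F T in at_right 0. a * exp (b * T - w T) = w T / T"
    proof -
      have "a * exp (b * T - w T) = w T / T" if "T > 0" for T
      proof -
        have "w T = a * T * exp (b * T) / exp (w T)" using weq[OF that] by (simp add: field_simps)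
        then show ?thesis using that by (simp add: exp_diff field_simps)
      qed
      then show ?thesis using eventually_at_right_less[of 0] by (auto elim!: eventually_mono)
    qed
    then show ?thesis using l by (intro Lim_transform_eventually[OF l]) (auto elim!: eventually_mono)
  qed
  define u where "u = (\<lambda>T. w T - b * T)"
  have ulim: "(u \<longlongrightarrow> 0) (at_right 0)"
  proof -
    have "(u \<longlongrightarrow> 0 - b * 0) (at_right 0)" unfolding u_def by (intro tendsto_intros wlim)
    then show ?thesis by simp
  qed
  have hu: "((\<lambda>T. h (u T)) \<longlongrightarrow> 1) (at_right 0)"
    using isCont_tendsto_compose[OF hcont ulim] by (simp add: h_def)
  have elim: "((\<lambda>T. c * \<eta> / a * (h (u T) * (w T / T - b) - (a - b))) \<longlongrightarrow>
      c * \<eta> / a * (1 * (a - b) - (a - b))) (at_right 0)"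
    by (intro tendsto_intros hu wT)
  have eps_eq: "\<forall>\<^sub>F T in at_right 0. c * \<eta> / a * (h (u T) * (w T / T - b) - (a - b)) = \<epsilon> T"
  proof -
    have "c * \<eta> / a * (h (u T) * (w T / T - b) - (a - b)) = \<epsilon> T" if "T > 0" for T
    proof -
      have "w T / T - b = u T / T" using that unfolding u_def by (simp add: field_simps)
      then have "h (u T) * (w T / T - b) = (exp (u T) - 1) / T" using hexp[of "u T"] by simp
      moreover have "\<epsilon> T = (c * \<eta> / a * exp (u T) - c * \<eta> / a * (1 + (a - b) * T)) / T"
        unfolding \<epsilon>_def rho_exp[OF that] tgt_eq u_def ..
      moreover have "(c * \<eta> / a * exp (u T) - c * \<eta> / a * (1 + (a - b) * T)) / T
          = c * \<eta> / a * ((exp (u T) - 1) / T - (a - b))"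
        using that apos by (simp add: field_simps)
      ultimately show ?thesis by simp
    qed
    then show ?thesis using eventually_at_right_less[of 0] by (auto elim!: eventually_mono)
  qed
  have epslim: "(\<epsilon> \<longlongrightarrow> 0) (at_right 0)"
    using Lim_transform_eventually[OF elim eps_eq] by simp
  have part2: "((\<lambda>T. rho_star r \<nu> \<mu> \<eta> \<sigma> s0 lam \<gamma> T) \<longlongrightarrow> c * (\<eta> / b)) at_top"
    if bpos: "b > 0"
  proof -
    define L where "L = (\<lambda>T::real. ln a + ln T + b * T)"
    have Xinf: "filterlim X at_top at_top" unfolding X_def using apos bpos by real_asymp
    have evX: "\<forall>\<^sub>F T in at_top. X T \<ge> exp 1 \<and> T > 0"
      using Xinf[unfolded filterlim_at_top, rule_format, of "exp 1"] eventually_gt_at_top[of 0]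
      by (rule eventually_conj)
    have bounds: "L T - ln (L T) \<le> w T \<and> w T \<le> L T" if "X T \<ge> exp 1" "T > 0" for T
    proof -
      have wp: "w T > 0" and we: "w T * exp (w T) = X T"
        using wpos[OF that(2)] weq[OF that(2)] unfolding X_def by auto
      have w1: "w T \<ge> 1"
      proof (rule ccontr)
        assume "\<not> w T \<ge> 1"
        then have "w T * exp (w T) < 1 * exp 1" using wp by (intro mult_strict_mono) auto
        then show False using we that by simp
      qed
      have lnX: "ln (X T) = L T"
        unfolding X_def L_def using apos that(2) by (simp add: ln_mult)
      have "ln (X T) = ln (w T * exp (w T))" using we by simp
      also have "\<dots> = ln (w T) + w T" using wp by (simp add: ln_mult)
      finally have "ln (X T) = ln (w T) + w T" .
      then have eq: "w T = L T - ln (w T)" using lnX by simp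
      have "1 * exp (w T) \<le> w T * exp (w T)" using w1 by (intro mult_right_mono) auto
      then have ex: "exp (w T) \<le> X T" using we by simp
      have "ln (exp (w T)) \<le> ln (X T)" using ex Xpos[OF that(2)] by (subst ln_le_cancel_iff) auto
      then have wle: "w T \<le> L T" using lnX by simp
      have "ln (w T) \<le> ln (L T)" using wle wp by simp
      moreover have "ln (w T) \<ge> 0" using w1 by simp
      ultimately show ?thesis using eq by linarith
    qed
    have l1: "((\<lambda>T. (L T - ln (L T)) / T) \<longlongrightarrow> b) at_top"
      unfolding L_def using apos bpos by real_asymp
    have l2: "((\<lambda>T. L T / T) \<longlongrightarrow> b) at_top"
      unfolding L_def using apos bpos by real_asymp
    have wTinf: "((\<lambda>T. w T / T) \<longlongrightarrow> b) at_top"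
    proof (rule tendsto_sandwich[OF _ _ l1 l2])
      show "\<forall>\<^sub>F T in at_top. (L T - ln (L T)) / T \<le> w T / T"
        using evX by (auto elim!: eventually_mono dest: bounds intro: divide_right_mono)
      show "\<forall>\<^sub>F T in at_top. w T / T \<le> L T / T"
        using evX by (auto elim!: eventually_mono dest: bounds intro: divide_right_mono)
    qed
    have "((\<lambda>T. c * \<eta> / (w T / T)) \<longlongrightarrow> c * \<eta> / b) at_top"
      using bpos by (intro tendsto_intros wTinf) auto
    moreover have "\<forall>\<^sub>F T in at_top. c * \<eta> / (w T / T) = rho_star r \<nu> \<mu> \<eta> \<sigma> s0 lam \<gamma> T"
      using eventually_gt_at_top[of 0] by (auto elim!: eventually_mono simp: rho)
    ultimately have "((\<lambda>T. rho_star r \<nu> \<mu> \<eta> \<sigma> s0 lam \<gamma> T) \<longlongrightarrow> c * \<eta> / b) at_top"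
      by (rule Lim_transform_eventually)
    then show ?thesis by simp
  qed
  show ?thesis
    apply (intro conjI impI)
    subgoal using part1a epslim unfolding tgt_def by blast
    subgoal using part2 unfolding b_def c_def by simp
    done
qed

end
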